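(* For every integer $n \geq 1$, the number of linear arrangements of $\{1,\ldots,n\}$ that avoid the patterns $12, 23, \ldots, (n-1)n$ and contain the pattern $n1$ is exactly $D_{n-1}$ (with the convention $D_0 = 0$).
   Context: A linear arrangement of $\{1,\ldots,n\}$ is a sequence $a_1\cdots a_n$ in which each of $1,\ldots,n$ appears exactly once. It contains the pattern $ij$ if $a_t=i$ and $a_{t+1}=j$ for some $t$ (i.e. $i$ is immediately followed by $j$); otherwise it avoids it. $D_m$ is the number of linear arrangements of $\{1,\ldots,m\}$ avoiding all of the patterns $12, 23, \ldots, (m-1)m, m1$; $D_0 = 0$. *)

theory Defs
  imports Main
begin

definition arrangements :: "nat \<Rightarrow> nat list set" where
  "arrangements n = {xs. distinct xs \<and> set xs = {1..n}}"

definition contains_pat :: "nat list \<Rightarrow> nat \<Rightarrow> nat \<Rightarrow> bool" where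
  "contains_pat xs i j \<longleftrightarrow> (\<exists>t. Suc t < length xs \<and> xs ! t = i \<and> xs ! Suc t = j)"

definition D :: "nat \<Rightarrow> nat" where
  "D m = (if m = 0 then 0 else
     card {xs \<in> arrangements m.
             (\<forall>i. 1 \<le> i \<and> i < m \<longrightarrow> \<not> contains_pat xs i (i + 1)) \<and> \<not> contains_pat xs m 1})"

end

theory Submission imports Defs begin
abbreviation adj :: "nat list \<Rightarrow> (nat\<times>nat) set" where "adj xs \<equiv> set (zip xs (tl xs))"

lemma contains_adj: "contains_pat xs i j \<longleftrightarrow> (i,j) \<in> adj xs"
  unfolding contains_pat_def set_zip apply (auto simp: nth_tl)
  subgoal for k by (rule exI[of _ k]) simp
  done

lemma adjD: "(a,b) \<in> adj xs \<Longrightarrow> a \<in> set xs \<and> b \<in> set xs"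
  apply (rule conjI)
   apply (erule set_zip_leftD)
  apply (drule set_zip_rightD)
  by (cases xs) auto

lemma adj_append: "adj (xs @ y # ys) = adj xs \<union> (if xs = [] then {} else {(last xs, y)}) \<union> adj (y#ys)"
proof (induction xs rule: induct_list012)
  case (3 x z zs) then show ?case by auto
qed auto

lemma adj_split1: "adj (us @ 1 # vs) = adj us \<union> (if us = [] then {} else {(last us, 1)}) \<union> adj (1#vs)"
  by (rule adj_append)

lemma adj_split2: "adj (us @ n # 1 # vs) = adj us \<union> (if us = [] then {} else {(last us, n)}) \<union> {(n,1)} \<union> adj (1#vs)"
  by (subst adj_append) auto

definition ins :: "nat \<Rightarrow> nat list \<Rightarrow> nat list" where
  "ins n ys = concat (map (\<lambda>x. if x = 1 then [n,1] else [x]) ys)"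

lemma ins_split: "1 \<notin> set us \<Longrightarrow> 1 \<notin> set vs \<Longrightarrow> ins n (us @ 1 # vs) = us @ n # 1 # vs"
proof -
  have "1 \<notin> set ws \<Longrightarrow> concat (map (\<lambda>x. if x = 1 then [n,1] else [x]) ws) = ws" for ws :: "nat list"
    by (induction ws) auto
  then show "1 \<notin> set us \<Longrightarrow> 1 \<notin> set vs \<Longrightarrow> ?thesis" by (simp add: ins_def)
qed

lemma pat_split: "contains_pat xs a b \<Longrightarrow> \<exists>us vs. xs = us @ a # b # vs"
proof -
  assume "contains_pat xs a b"
  then obtain t where t: "Suc t < length xs" "xs ! t = a" "xs ! Suc t = b"
    unfolding contains_pat_def by blast
  have "xs = take t xs @ xs!t # drop (Suc t) xs" using t by (metis Suc_lessD id_take_nth_drop)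
  moreover have "drop (Suc t) xs = xs ! Suc t # drop (Suc (Suc t)) xs"
    using t by (metis Cons_nth_drop_Suc)
  ultimately show ?thesis using t by metis
qed

theorem corollary2p2:
  fixes n :: nat
  assumes "n \<ge> 1"
  shows "card {xs \<in> arrangements n.
                (\<forall>i. 1 \<le> i \<and> i < n \<longrightarrow> \<not> contains_pat xs i (i + 1)) \<and> contains_pat xs n 1}
         = D (n - 1)"
proof (cases "n = 1")
  case True
  have E: "distinct xs \<Longrightarrow> \<not> contains_pat xs 1 1" for xs
    unfolding contains_pat_def by (metis Suc_lessD n_not_Suc_n nth_eq_iff_index_eq)
  have S: "{xs. distinct xs \<and> set xs = {Suc 0} \<and> contains_pat xs (Suc 0) (Suc 0)} = {}"
    using E by auto
  show ?thesis using True by (simp add: D_def arrangements_def S)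
next
  case False
  then have n2: "n \<ge> 2" using assms by simp
  let ?A = "{xs \<in> arrangements n.
                (\<forall>i. 1 \<le> i \<and> i < n \<longrightarrow> \<not> contains_pat xs i (i + 1)) \<and> contains_pat xs n 1}"
  let ?B = "{xs \<in> arrangements (n-1).
             (\<forall>i. 1 \<le> i \<and> i < n-1 \<longrightarrow> \<not> contains_pat xs i (i + 1)) \<and> \<not> contains_pat xs (n-1) 1}"
  have DB: "D (n-1) = card ?B" using n2 by (simp add: D_def)
  have fwd: "removeAll n xs \<in> ?B \<and> ins n (removeAll n xs) = xs" if xA: "xs \<in> ?A" for xs
  proof -
    from xA obtain us vs where xs: "xs = us @ n # 1 # vs"
      using pat_split by blast
    from xA have dist: "distinct xs" and st: "set xs = {1..n}" by (auto simp: arrangements_def)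
    have nu: "n \<notin> set us" "n \<notin> set vs" "1 \<notin> set us" "1 \<notin> set vs"
      using dist n2 by (auto simp: xs)
    have rem: "removeAll n xs = us @ 1 # vs" using nu n2 by (simp add: xs)
    have P: "\<And>i. 1 \<le> i \<Longrightarrow> i < n \<Longrightarrow> (i, i+1) \<notin> adj xs"
      using xA by (simp add: contains_adj)
    have "set (removeAll n xs) = {1..n} - {n}" using st by simp
    also have "{1..n} - {n} = {1..n-1}" using n2 by auto
    finally have "removeAll n xs \<in> arrangements (n-1)"
      using dist unfolding arrangements_def by (simp add: distinct_removeAll)
    moreover have "(i, i+1) \<notin> adj (us @ 1 # vs)" if "1 \<le> i" "i < n-1" for i
    proof
      assume "(i, i+1) \<in> adj (us @ 1 # vs)"
      then have "(i, i+1) \<in> adj xs" using that unfolding adj_split1 xs adj_split2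
        by (auto split: if_splits)
      then show False using P that by simp
    qed
    moreover have "(n-1, 1) \<notin> adj (us @ 1 # vs)"
    proof
      assume a: "(n-1, 1) \<in> adj (us @ 1 # vs)"
      have "(n-1, 1) \<notin> adj us" "(n-1, 1) \<notin> adj (1#vs)"
        using adjD[of "n-1" 1] nu n2 by (auto dest: set_zip_rightD)
      with a have "us \<noteq> [] \<and> last us = n-1" unfolding adj_split1 by (auto split: if_splits)
      then have "(n-1, n-1+1) \<in> adj xs" unfolding xs adj_split2 using n2 by auto
      moreover have "1 \<le> n-1" "n-1 < n" using n2 by auto
      ultimately show False using P[of "n-1"] by blast
    qed
    ultimately show ?thesis using rem ins_split nu by (auto simp: contains_adj xs)
  qed
  have bwd: "ins n ys \<in> ?A \<and> removeAll n (ins n ys) = ys" if yB: "ys \<in> ?B" for ys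
  proof -
    from yB have dist: "distinct ys" and st: "set ys = {1..n-1}" by (auto simp: arrangements_def)
    then have "1 \<in> set ys" using n2 by auto
    then obtain us vs where ys: "ys = us @ 1 # vs" by (meson split_list)
    have nys: "n \<notin> set ys" using st n2 by auto
    have nu: "n \<notin> set us" "n \<notin> set vs" "1 \<notin> set us" "1 \<notin> set vs"
      using dist nys n2 by (auto simp: ys)
    have insy: "ins n ys = us @ n # 1 # vs" using nu ins_split ys by simp
    have Q: "\<And>i. 1 \<le> i \<Longrightarrow> i < n-1 \<Longrightarrow> (i, i+1) \<notin> adj ys" and Q2: "(n-1,1) \<notin> adj ys"
      using yB by (simp_all add: contains_adj)
    have "set (ins n ys) = insert n (set ys)" unfolding insy by (auto simp: ys)
    also have "insert n (set ys) = {1..n}" using st n2 by auto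
    finally have "ins n ys \<in> arrangements n"
      using dist nys unfolding arrangements_def insy by (auto simp: ys)
    moreover have "(i, i+1) \<notin> adj (us @ n # 1 # vs)" if "1 \<le> i" "i < n" for i
    proof
      assume a: "(i, i+1) \<in> adj (us @ n # 1 # vs)"
      show False
      proof (cases "i = n-1")
        case True
        have "(n-1, n) \<notin> adj us" "(n-1, n) \<notin> adj (1#vs)"
          using adjD[of "n-1" n] nu n2 by (auto dest: set_zip_rightD)
        with a True n2 have "us \<noteq> [] \<and> last us = n-1" unfolding adj_split2
          by (auto split: if_splits)
        then have "(n-1, 1) \<in> adj ys" unfolding ys adj_split1 by auto
        then show False using Q2 by simp
      next
        case False
        with a that have "(i, i+1) \<in> adj ys" unfolding ys adj_split1 adj_split2
          by (auto split: if_splits)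
        then show False using Q False that by simp
      qed
    qed
    moreover have "(n,1) \<in> adj (us @ n # 1 # vs)" unfolding adj_split2 by simp
    moreover have "removeAll n (ins n ys) = ys" unfolding insy using nu n2 by (simp add: ys)
    ultimately show ?thesis by (simp add: contains_adj insy)
  qed
  have "bij_betw (removeAll n) ?A ?B"
  proof (rule bij_betw_byWitness[where f'="ins n"])
    show "\<forall>a\<in>?A. ins n (removeAll n a) = a" by (intro ballI conjunct2[OF fwd])
    show "\<forall>a\<in>?B. removeAll n (ins n a) = a" by (intro ballI conjunct2[OF bwd])
    show "removeAll n ` ?A \<subseteq> ?B" by (intro image_subsetI conjunct1[OF fwd])
    show "ins n ` ?B \<subseteq> ?A" by (intro image_subsetI conjunct1[OF bwd])
  qed
  then have "card ?A = card ?B" by (rule bij_betw_same_card)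
  then show ?thesis using DB by simp
qed
end
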